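(* Let $F$ be a graph and $C$ a cycle of $F$ such that $(F,C)$ forms a conflict path. Then every vertex of $C$ is an attachment of at most two $C$-bridges.
   Context: Let $F$ be a graph and $C$ a cycle of $F$. A $C$-bridge is either a chord of $C$ (an edge not in $C$ with both endpoints on $C$) or a connected component of $F-V(C)$ together with all edges joining it to $C$ and their endpoints on $C$. The attachments $\mathrm{att}(X)$ of a $C$-bridge $X$ are the vertices of $C$ incident to edges of $X$. Two pairs $\{x,y\}$, $\{u,v\}$ of four distinct vertices of $C$ alternate if each of the two arcs of $C$ with endpoints $x,y$ contains exactly one of $u,v$; two vertex sets alternate if some pair from one alternates with some pair from the other. Two $C$-bridges conflict if they share at least three attachments or their attachment sets alternate; the conflict graph $\mathrm{Con}(C)$ has the $C$-bridges as vertices, two adjacent iff they conflict. The pair $(F,C)$ forms a conflict path if every $C$-bridge has exactly two attachments and $\mathrm{Con}(C)$ is a path. *)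

theory Defs
  imports Main
begin

definition graph :: "'a set \<Rightarrow> 'a set set \<Rightarrow> bool" where
  "graph V E \<longleftrightarrow> finite V \<and> (\<forall>e\<in>E. \<exists>a b. e = {a, b} \<and> a \<noteq> b \<and> a \<in> V \<and> b \<in> V)"

text \<open>A cycle is given by the cyclic list of its distinct vertices.\<close>
definition cyc_edges :: "'a list \<Rightarrow> 'a set set" where
  "cyc_edges cs = {{cs ! i, cs ! ((i + 1) mod length cs)} | i. i < length cs}"

definition is_cycle :: "'a set \<Rightarrow> 'a set set \<Rightarrow> 'a list \<Rightarrow> bool" where
  "is_cycle V E cs \<longleftrightarrow> distinct cs \<and> length cs \<ge> 3 \<and> set cs \<subseteq> V \<and> cyc_edges cs \<subseteq> E"

definition adj_out :: "'a set \<Rightarrow> 'a set set \<Rightarrow> 'a list \<Rightarrow> 'a \<Rightarrow> 'a \<Rightarrow> bool" where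
  "adj_out V E cs a b \<longleftrightarrow> {a, b} \<in> E \<and> a \<in> V - set cs \<and> b \<in> V - set cs"

definition components_out :: "'a set \<Rightarrow> 'a set set \<Rightarrow> 'a list \<Rightarrow> 'a set set" where
  "components_out V E cs = {{b. (adj_out V E cs)\<^sup>*\<^sup>* a b} | a. a \<in> V - set cs}"

text \<open>A C-bridge is represented as the pair (vertex set, edge set) of the subgraph.\<close>
definition comp_bridge :: "'a set \<Rightarrow> 'a set set \<Rightarrow> 'a list \<Rightarrow> 'a set \<Rightarrow> 'a set \<times> 'a set set" where
  "comp_bridge V E cs K =
     (K \<union> {c \<in> set cs. \<exists>k\<in>K. {k, c} \<in> E}, {e \<in> E. e \<inter> K \<noteq> {}})"

definition chords :: "'a set set \<Rightarrow> 'a list \<Rightarrow> 'a set set" where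
  "chords E cs = {e \<in> E. e \<notin> cyc_edges cs \<and> e \<subseteq> set cs}"

definition bridges :: "'a set \<Rightarrow> 'a set set \<Rightarrow> 'a list \<Rightarrow> ('a set \<times> 'a set set) set" where
  "bridges V E cs = (\<lambda>e. (e, {e})) ` chords E cs \<union> comp_bridge V E cs ` components_out V E cs"

definition att :: "'a list \<Rightarrow> 'a set \<times> 'a set set \<Rightarrow> 'a set" where
  "att cs X = {v \<in> set cs. \<exists>e\<in>snd X. v \<in> e}"

text \<open>Pairs {x,y} and {u,v} of four distinct cycle vertices alternate: each of the two arcs
  of C between x and y contains exactly one of u, v. With positions along the list cs,
  one arc consists of the vertices strictly between the positions of x and y.\<close>
definition pos :: "'a list \<Rightarrow> 'a \<Rightarrow> nat" where
  "pos cs x = (THE i. i < length cs \<and> cs ! i = x)"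

definition in_arc :: "'a list \<Rightarrow> 'a \<Rightarrow> 'a \<Rightarrow> 'a \<Rightarrow> bool" where
  "in_arc cs x y w \<longleftrightarrow> min (pos cs x) (pos cs y) < pos cs w
                       \<and> pos cs w < max (pos cs x) (pos cs y)"

definition pairs_alternate :: "'a list \<Rightarrow> 'a \<Rightarrow> 'a \<Rightarrow> 'a \<Rightarrow> 'a \<Rightarrow> bool" where
  "pairs_alternate cs x y u v \<longleftrightarrow>
     distinct [x, y, u, v] \<and> {x, y, u, v} \<subseteq> set cs \<and>
     (in_arc cs x y u \<longleftrightarrow> \<not> in_arc cs x y v)"

definition sets_alternate :: "'a list \<Rightarrow> 'a set \<Rightarrow> 'a set \<Rightarrow> bool" where
  "sets_alternate cs A B \<longleftrightarrow> (\<exists>x\<in>A. \<exists>y\<in>A. \<exists>u\<in>B. \<exists>v\<in>B. pairs_alternate cs x y u v)"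

definition conflict :: "'a list \<Rightarrow> 'a set \<times> 'a set set \<Rightarrow> 'a set \<times> 'a set set \<Rightarrow> bool" where
  "conflict cs X Y \<longleftrightarrow> card (att cs X \<inter> att cs Y) \<ge> 3 \<or> sets_alternate cs (att cs X) (att cs Y)"

definition conflict_graph_is_path :: "'a set \<Rightarrow> 'a set set \<Rightarrow> 'a list \<Rightarrow> bool" where
  "conflict_graph_is_path V E cs \<longleftrightarrow>
     (\<exists>ps. ps \<noteq> [] \<and> distinct ps \<and> set ps = bridges V E cs \<and>
        (\<forall>i<length ps. \<forall>j<length ps. i \<noteq> j \<longrightarrow>
            (conflict cs (ps ! i) (ps ! j) \<longleftrightarrow> i = j + 1 \<or> j = i + 1)))"

definition conflict_path :: "'a set \<Rightarrow> 'a set set \<Rightarrow> 'a list \<Rightarrow> bool" where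
  "conflict_path V E cs \<longleftrightarrow>
     (\<forall>X\<in>bridges V E cs. card (att cs X) = 2) \<and> conflict_graph_is_path V E cs"

end

theory Submission
  imports Defs
begin

definition crs :: "nat \<Rightarrow> nat \<Rightarrow> nat \<Rightarrow> nat \<Rightarrow> bool" where
 "crs l1 h1 l2 h2 \<longleftrightarrow> (l1 < l2 \<and> l2 < h1 \<and> h1 < h2) \<or> (l2 < l1 \<and> l1 < h2 \<and> h2 < h1)"

definition betw :: "nat \<Rightarrow> nat \<Rightarrow> nat \<Rightarrow> bool" where
  "betw x y z \<longleftrightarrow> (x < z \<and> z < y) \<or> (y < z \<and> z < x)"

definition alt :: "nat \<Rightarrow> nat \<Rightarrow> nat \<Rightarrow> nat \<Rightarrow> bool" where
  "alt x y z w \<longleftrightarrow> (betw x y z \<longleftrightarrow> \<not> betw x y w)"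

lemma betw_minmax: "(min x y < z \<and> z < max x y) \<longleftrightarrow> betw x y z"
  unfolding betw_def min_def max_def by auto

lemma crs_alt:
  fixes x y z w :: nat
  assumes "distinct [x,y,z,w]"
  shows "crs (min x y) (max x y) (min z w) (max z w) \<longleftrightarrow> alt x y z w"
  using assms unfolding crs_def alt_def betw_def min_def max_def by auto

lemma betw_sym: "betw x y z = betw y x z" unfolding betw_def by auto

lemma betw_dec: "0 < x \<Longrightarrow> 0 < y \<Longrightarrow> 0 < z \<Longrightarrow> betw (x - 1) (y - 1) (z - 1) = betw x y z"
  unfolding betw_def by auto

lemma betw_top: "0 < y \<Longrightarrow> 0 < z \<Longrightarrow> z \<noteq> y \<Longrightarrow> y < n \<Longrightarrow> z < n \<Longrightarrow>
   betw (n - 1) (y - 1) (z - 1) \<longleftrightarrow> \<not> betw 0 y z"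
  unfolding betw_def by auto

lemma betw_bot: "x < n \<Longrightarrow> y < n \<Longrightarrow> \<not> betw x y 0 \<and> \<not> betw (x - 1) (y - 1) (n - 1)"
  unfolding betw_def by auto

definition rot1 :: "nat \<Rightarrow> nat \<Rightarrow> nat" where
  "rot1 n x = (if x = 0 then n - 1 else x - 1)"

lemma alt_rot1:
  fixes n a b c d :: nat
  assumes "a < n" "b < n" "c < n" "d < n" "distinct [a,b,c,d]"
  shows "alt (rot1 n a) (rot1 n b) (rot1 n c) (rot1 n d) \<longleftrightarrow> alt a b c d"
proof -
  consider "a = 0" | "b = 0" | "c = 0" | "d = 0" | "0 < a" "0 < b" "0 < c" "0 < d" by blast
  then show ?thesis
  proof cases
    case 1
    then have "0 < b" "0 < c" "0 < d" using assms(5) by auto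
    then show ?thesis using assms 1 unfolding alt_def rot1_def
      using betw_top[of b c n] betw_top[of b d n] by auto
  next
    case 2
    then have "0 < a" "0 < c" "0 < d" using assms(5) by auto
    then show ?thesis using assms 2 unfolding alt_def rot1_def
      using betw_top[of a c n] betw_top[of a d n] betw_sym by auto
  next
    case 3
    then have "0 < a" "0 < b" "0 < d" using assms(5) by auto
    then show ?thesis using assms 3 unfolding alt_def rot1_def
      using betw_bot[of a n b] betw_dec[of a b d] by auto
  next
    case 4
    then have "0 < a" "0 < b" "0 < c" using assms(5) by auto
    then show ?thesis using assms 4 unfolding alt_def rot1_def
      using betw_bot[of a n b] betw_dec[of a b c] by auto
  next
    case 5
    then show ?thesis unfolding alt_def rot1_def using betw_dec by auto
  qed
qed

definition rot :: "nat \<Rightarrow> nat \<Rightarrow> nat \<Rightarrow> nat" where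
 "rot n s x = (if s \<le> x then x - s else x + n - s)"

lemma rot_lt: "x < n \<Longrightarrow> s < n \<Longrightarrow> rot n s x < n" unfolding rot_def by auto
lemma rot_inj: "x < n \<Longrightarrow> y < n \<Longrightarrow> s < n \<Longrightarrow> rot n s x = rot n s y \<Longrightarrow> x = y"
  unfolding rot_def by (auto split: if_splits)
lemma rot_Suc: "x < n \<Longrightarrow> Suc s < n \<Longrightarrow> rot n (Suc s) x = rot1 n (rot n s x)"
  unfolding rot_def rot1_def by auto
lemma rot_0: "x < n \<Longrightarrow> rot n 0 x = x" unfolding rot_def by auto

lemma alt_rot:
  fixes n a b c d :: nat
  assumes "a < n" "b < n" "c < n" "d < n" "distinct [a,b,c,d]"
  shows "s < n \<Longrightarrow> alt (rot n s a) (rot n s b) (rot n s c) (rot n s d) \<longleftrightarrow> alt a b c d"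
proof (induction s)
  case 0
  then show ?case using assms by (simp add: rot_0)
next
  case (Suc s)
  have d: "distinct [rot n s a, rot n s b, rot n s c, rot n s d]"
    using assms Suc.prems rot_inj[where n=n and s=s] by auto
  have "alt (rot n (Suc s) a) (rot n (Suc s) b) (rot n (Suc s) c) (rot n (Suc s) d)
     \<longleftrightarrow> alt (rot n s a) (rot n s b) (rot n s c) (rot n s d)"
    using alt_rot1[OF rot_lt rot_lt rot_lt rot_lt d] assms Suc.prems rot_Suc by simp
  then show ?case using Suc by simp
qed

lemma rot_alt:
  fixes a b c d s n :: nat
  assumes "a < n" "b < n" "c < n" "d < n" "s < n" "distinct [a,b,c,d]"
  shows "((min a b < c \<and> c < max a b) \<longleftrightarrow> \<not> (min a b < d \<and> d < max a b)) \<longleftrightarrow>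
     crs (min (rot n s a) (rot n s b)) (max (rot n s a) (rot n s b))
         (min (rot n s c) (rot n s d)) (max (rot n s c) (rot n s d))"
proof -
  have d: "distinct [rot n s a, rot n s b, rot n s c, rot n s d]"
    using assms rot_inj[where n=n and s=s] by auto
  show ?thesis using alt_rot[OF assms(1-4,6,5)] unfolding crs_alt[OF d] betw_minmax alt_def by blast
qed

definition pathP :: "nat \<Rightarrow> (nat \<Rightarrow> nat) \<Rightarrow> (nat \<Rightarrow> nat) \<Rightarrow> bool" where
 "pathP m lo hi \<longleftrightarrow> (\<forall>i<m. \<forall>j<m. i \<noteq> j \<longrightarrow> (crs (lo i) (hi i) (lo j) (hi j) \<longleftrightarrow> i = j + 1 \<or> j = i + 1))"

lemma up:
  assumes P: "pathP m lo hi"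
    and km: "k + 2 < m" and n1: "lo k \<le> lo (k+2)" and n2: "hi (k+2) \<le> hi k"
    and p0: "0 < lo (k+2)" and k0: "0 < lo k"
    and i3: "lo i3 = 0" "k + 2 \<le> i3" "i3 < m"
  shows False
proof -
  have "j < m \<longrightarrow> 0 < lo j \<and> lo k \<le> lo j \<and> hi j \<le> hi k" if "k + 2 \<le> j" for j
    using that
  proof (induction j rule: dec_induct)
    case base
    then show ?case using n1 n2 p0 by simp
  next
    case (step n)
    show ?case
    proof
      assume sm: "Suc n < m"
      have c1: "crs (lo n) (hi n) (lo (Suc n)) (hi (Suc n))"
        using P sm unfolding pathP_def by auto
      have c2: "\<not> crs (lo k) (hi k) (lo (Suc n)) (hi (Suc n))"
      proof -
        have "k < m" "k \<noteq> Suc n" "\<not> (k = Suc n + 1 \<or> Suc n = k + 1)" using step(1) km by auto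
        then show ?thesis using P sm unfolding pathP_def by blast
      qed
      have ih: "0 < lo n \<and> lo k \<le> lo n \<and> hi n \<le> hi k" using step sm by simp
      show "0 < lo (Suc n) \<and> lo k \<le> lo (Suc n) \<and> hi (Suc n) \<le> hi k"
        using c1 c2 ih k0 unfolding crs_def by auto
    qed
  qed
  then show False using i3 by fastforce
qed

lemma rev_path:
  assumes "pathP m lo hi"
  shows "pathP m (\<lambda>i. lo (m - 1 - i)) (\<lambda>i. hi (m - 1 - i))"
  unfolding pathP_def
proof (intro allI impI)
  fix i j assume "i < m" "j < m" "i \<noteq> j"
  then have "m - 1 - i < m" "m - 1 - j < m" "m - 1 - i \<noteq> m - 1 - j" by auto
  then have "crs (lo (m - 1 - i)) (hi (m - 1 - i)) (lo (m - 1 - j)) (hi (m - 1 - j)) \<longleftrightarrow>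
     (m - 1 - i = m - 1 - j + 1 \<or> m - 1 - j = m - 1 - i + 1)"
    using assms unfolding pathP_def by blast
  also have "\<dots> \<longleftrightarrow> (i = j + 1 \<or> j = i + 1)" using \<open>i < m\<close> \<open>j < m\<close> by auto
  finally show "crs (lo (m - 1 - i)) (hi (m - 1 - i)) (lo (m - 1 - j)) (hi (m - 1 - j)) \<longleftrightarrow>
     (i = j + 1 \<or> j = i + 1)" .
qed

lemma core_sorted:
  assumes P: "pathP m lo hi"
    and ord: "i1 < i2" "i2 < i3" "i3 < m"
    and pts: "lo i1 = 0" "lo i2 = 0" "lo i3 = 0"
  shows False
proof -
  define c1 where "c1 = i2 - 1"
  define c2 where "c2 = i2 + 1"
  have c1i: "c1 + 1 = i2" "c1 < m" using ord c1_def by auto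
  have c2i: "c2 = i2 + 1" "c2 < m" using ord c2_def by auto
  have x1: "crs (lo c1) (hi c1) (lo i2) (hi i2)" using P c1i ord unfolding pathP_def by auto
  have x2: "crs (lo c2) (hi c2) (lo i2) (hi i2)" using P c2i ord unfolding pathP_def by auto
  have x3: "\<not> crs (lo c1) (hi c1) (lo c2) (hi c2)" using P c1i c2i unfolding pathP_def by auto
  have l1: "0 < lo c1" using x1 pts unfolding crs_def by auto
  have l2: "0 < lo c2" using x2 pts unfolding crs_def by auto
  have i3ne: "i3 \<noteq> c2" using l2 pts by auto
  have i1ne: "i1 \<noteq> c1" using l1 pts by auto
  have nest: "(lo c1 \<le> lo c2 \<and> hi c2 \<le> hi c1) \<or> (lo c2 \<le> lo c1 \<and> hi c1 \<le> hi c2)"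
    using x1 x2 x3 pts unfolding crs_def by auto
  then show False
  proof
    assume a: "lo c1 \<le> lo c2 \<and> hi c2 \<le> hi c1"
    show False
      by (rule up[OF P, of c1 i3]) (use a l1 l2 c1i c2i ord pts i3ne in auto)
  next
    assume a: "lo c2 \<le> lo c1 \<and> hi c1 \<le> hi c2"
    have P': "pathP m (\<lambda>i. lo (m - 1 - i)) (\<lambda>i. hi (m - 1 - i))" by (rule rev_path[OF P])
    have e1: "m - 1 - (m - 1 - c2) = c2" "m - 1 - (m - 1 - c2 + 2) = c1" "m - 1 - (m - 1 - i1) = i1"
      using c1i c2i ord by auto
    show False
      by (rule up[OF P', of "m - 1 - c2" "m - 1 - i1"]) (use a l1 l2 c1i c2i ord pts i1ne e1 in auto)
  qed
qed

lemma core3: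
  assumes P: "pathP m lo hi"
    and "i1 < m" "i2 < m" "i3 < m" "distinct [i1, i2, i3]"
    and "lo i1 = 0" "lo i2 = 0" "lo i3 = 0"
  shows False
  using assms core_sorted[OF P] by (metis distinct_length_2_or_more distinct_singleton linorder_neqE_nat)


lemma pos_nth: "distinct cs \<Longrightarrow> i < length cs \<Longrightarrow> pos cs (cs ! i) = i"
  unfolding pos_def by (rule the_equality) (auto simp: nth_eq_iff_index_eq)

lemma pos_in: assumes "x \<in> set cs" "distinct cs" shows "pos cs x < length cs" "cs ! pos cs x = x"
proof -
  obtain i where "i < length cs" "cs ! i = x" using assms(1) by (auto simp: in_set_conv_nth)
  then show "pos cs x < length cs" "cs ! pos cs x = x" using pos_nth[OF assms(2)] by auto
qed

lemma pos_inj: "distinct cs \<Longrightarrow> x \<in> set cs \<Longrightarrow> y \<in> set cs \<Longrightarrow> pos cs x = pos cs y \<Longrightarrow> x = y"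
  by (metis pos_in(2))

lemma in_arc_sym: "in_arc cs x y w = in_arc cs y x w"
  unfolding in_arc_def by (simp add: min.commute max.commute)

lemma pa_sym1: "pairs_alternate cs x y u w \<Longrightarrow> pairs_alternate cs y x u w"
  unfolding pairs_alternate_def using in_arc_sym[of cs x y] by auto

lemma pa_sym2: "pairs_alternate cs x y u w \<Longrightarrow> pairs_alternate cs x y w u"
  unfolding pairs_alternate_def by auto

lemma sa_pairs:
  assumes "a \<noteq> b" "c \<noteq> d"
  shows "sets_alternate cs {a,b} {c,d} \<longleftrightarrow> pairs_alternate cs a b c d"
proof
  assume "sets_alternate cs {a,b} {c,d}"
  then obtain x y u w where xy: "x \<in> {a,b}" "y \<in> {a,b}" "u \<in> {c,d}" "w \<in> {c,d}"
    and p: "pairs_alternate cs x y u w" unfolding sets_alternate_def by blast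
  have "x \<noteq> y" "u \<noteq> w" using p unfolding pairs_alternate_def by auto
  then have "(x = a \<and> y = b \<or> x = b \<and> y = a) \<and> (u = c \<and> w = d \<or> u = d \<and> w = c)"
    using xy by auto
  then show "pairs_alternate cs a b c d" using p pa_sym1 pa_sym2 by metis
next
  assume "pairs_alternate cs a b c d"
  then show "sets_alternate cs {a,b} {c,d}" unfolding sets_alternate_def by blast
qed

lemma crs_ne: "crs (min x y) (max x y) (min z w) (max z w) \<Longrightarrow> x \<noteq> z \<and> x \<noteq> w \<and> y \<noteq> z \<and> y \<noteq> w"
  unfolding crs_def min_def max_def by (auto split: if_splits)

lemma conf_iff:
  assumes dc: "distinct cs" and AB: "A \<subseteq> set cs" "B \<subseteq> set cs" and c2: "card A = 2" "card B = 2"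
    and s: "s < length cs"
  shows "(3 \<le> card (A \<inter> B) \<or> sets_alternate cs A B) \<longleftrightarrow>
    crs (Min ((\<lambda>x. rot (length cs) s (pos cs x)) ` A)) (Max ((\<lambda>x. rot (length cs) s (pos cs x)) ` A))
        (Min ((\<lambda>x. rot (length cs) s (pos cs x)) ` B)) (Max ((\<lambda>x. rot (length cs) s (pos cs x)) ` B))"
proof -
  let ?K = "\<lambda>x. rot (length cs) s (pos cs x)"
  obtain a b where A: "A = {a,b}" "a \<noteq> b" using c2(1) card_2_iff by metis
  obtain c d where B: "B = {c,d}" "c \<noteq> d" using c2(2) card_2_iff by metis
  have "card (A \<inter> B) \<le> 2" using c2(1) card_mono[of A "A \<inter> B"] A by auto
  then have L: "(3 \<le> card (A \<inter> B) \<or> sets_alternate cs A B) \<longleftrightarrow> pairs_alternate cs a b c d"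
    using sa_pairs[OF A(2) B(2)] A B by auto
  have mm: "Min (?K ` A) = min (?K a) (?K b)" "Max (?K ` A) = max (?K a) (?K b)"
    "Min (?K ` B) = min (?K c) (?K d)" "Max (?K ` B) = max (?K c) (?K d)" using A B by auto
  have inS: "a \<in> set cs" "b \<in> set cs" "c \<in> set cs" "d \<in> set cs" using AB A B by auto
  have pl: "pos cs a < length cs" "pos cs b < length cs" "pos cs c < length cs" "pos cs d < length cs"
    using pos_in(1)[OF _ dc] inS by auto
  show ?thesis
  proof (cases "distinct [a,b,c,d]")
    case True
    then have dp: "distinct [pos cs a, pos cs b, pos cs c, pos cs d]"
      using pos_inj[OF dc] inS by auto
    have "pairs_alternate cs a b c d \<longleftrightarrow>
       ((min (pos cs a) (pos cs b) < pos cs c \<and> pos cs c < max (pos cs a) (pos cs b)) \<longleftrightarrow>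
        \<not> (min (pos cs a) (pos cs b) < pos cs d \<and> pos cs d < max (pos cs a) (pos cs b)))"
      unfolding pairs_alternate_def in_arc_def using True inS by auto
    also have "\<dots> \<longleftrightarrow> crs (min (?K a) (?K b)) (max (?K a) (?K b)) (min (?K c) (?K d)) (max (?K c) (?K d))"
      by (rule rot_alt[OF pl s dp])
    finally show ?thesis using L mm by simp
  next
    case False
    then have "\<not> pairs_alternate cs a b c d" unfolding pairs_alternate_def by auto
    moreover have "\<not> crs (min (?K a) (?K b)) (max (?K a) (?K b)) (min (?K c) (?K d)) (max (?K c) (?K d))"
      using crs_ne False A(2) B(2) by fastforce
    ultimately show ?thesis using L mm by simp
  qed
qed

theorem lemma24:
  fixes V :: "'a set" and E :: "'a set set" and cs :: "'a list"
  assumes "graph V E"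
    and "is_cycle V E cs"
    and "conflict_path V E cs"
  shows "\<forall>v\<in>set cs. card {X \<in> bridges V E cs. v \<in> att cs X} \<le> 2"
proof (rule ballI, rule ccontr)
  fix v assume v: "v \<in> set cs" and nc: "\<not> card {X \<in> bridges V E cs. v \<in> att cs X} \<le> 2"
  have dc: "distinct cs" using assms(2) unfolding is_cycle_def by auto
  have c2: "\<And>X. X \<in> bridges V E cs \<Longrightarrow> card (att cs X) = 2"
    using assms(3) unfolding conflict_path_def by auto
  obtain ps where ps: "distinct ps" "set ps = bridges V E cs"
    and pp: "\<And>i j. i < length ps \<Longrightarrow> j < length ps \<Longrightarrow> i \<noteq> j \<Longrightarrow>
            (conflict cs (ps ! i) (ps ! j) \<longleftrightarrow> i = j + 1 \<or> j = i + 1)"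
    using assms(3) unfolding conflict_path_def conflict_graph_is_path_def by blast
  have attsub: "\<And>X. att cs X \<subseteq> set cs" unfolding att_def by auto
  let ?S = "{X \<in> bridges V E cs. v \<in> att cs X}"
  obtain T where T: "T \<subseteq> ?S" "card T = 3" using obtain_subset_with_card_n[of 3 ?S] nc by auto
  obtain X1 X2 X3 where X: "T = {X1, X2, X3}" "X1 \<noteq> X2" "X2 \<noteq> X3" "X1 \<noteq> X3"
    using T(2) unfolding card_3_iff by blast
  have Xin: "X1 \<in> set ps" "X2 \<in> set ps" "X3 \<in> set ps" using T(1) X(1) ps(2) by auto
  have Xv: "v \<in> att cs X1" "v \<in> att cs X2" "v \<in> att cs X3" using T(1) X(1) by auto
  obtain i1 where i1: "i1 < length ps" "ps ! i1 = X1" using Xin(1) by (auto simp: in_set_conv_nth)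
  obtain i2 where i2: "i2 < length ps" "ps ! i2 = X2" using Xin(2) by (auto simp: in_set_conv_nth)
  obtain i3 where i3: "i3 < length ps" "ps ! i3 = X3" using Xin(3) by (auto simp: in_set_conv_nth)
  have di: "distinct [i1, i2, i3]" using X i1 i2 i3 by auto
  define n where "n = length cs"
  define s where "s = pos cs v"
  have sn: "s < n" unfolding s_def n_def using pos_in(1)[OF v dc] .
  define K where "K = (\<lambda>x. rot n s (pos cs x))"
  define lo where "lo = (\<lambda>i. Min (K ` att cs (ps ! i)))"
  define hi where "hi = (\<lambda>i. Max (K ` att cs (ps ! i)))"
  have P: "pathP (length ps) lo hi"
    unfolding pathP_def
  proof (intro allI impI)
    fix i j assume ij: "i < length ps" "j < length ps" "i \<noteq> j"
    have b: "ps ! i \<in> bridges V E cs" "ps ! j \<in> bridges V E cs" using ij ps(2) by auto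
    have "conflict cs (ps ! i) (ps ! j) \<longleftrightarrow> crs (lo i) (hi i) (lo j) (hi j)"
      unfolding conflict_def lo_def hi_def K_def n_def
      by (rule conf_iff[OF dc attsub attsub c2[OF b(1)] c2[OF b(2)]]) (use sn n_def in simp)
    then show "crs (lo i) (hi i) (lo j) (hi j) \<longleftrightarrow> i = j + 1 \<or> j = i + 1" using pp[OF ij] by simp
  qed
  have Kv: "K v = 0" unfolding K_def s_def rot_def by simp
  have lo0: "lo i = 0" if "i < length ps" "v \<in> att cs (ps ! i)" for i
  proof -
    have "finite (att cs (ps ! i))" using attsub finite_subset by blast
    then have "lo i \<le> K v" unfolding lo_def using that(2) by (intro Min_le) auto
    then show ?thesis using Kv by simp
  qed
  show False
    by (rule core3[OF P i1(1) i2(1) i3(1) di]) (use lo0 i1 i2 i3 Xv in auto)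
qed

end
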